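(* Let $R$ be a commutative ring and let $k\geq 1$. Let $x=(x^1,\dots,x^{k+1})$ and $y=(y^1,\dots,y^{k+1})$ be good configurations in $(R^2)^{k+1}$ such that $x^i\cdot x^{j\perp}=y^i\cdot y^{j\perp}$ for every pair of indices $i,j$. Then there exists a unique $g\in\mathrm{SL}_2(R)$ such that $y^i=gx^i$ for each $i$.
   Context: For $x=(x_1,x_2),y=(y_1,y_2)\in R^2$, write $y^\perp=(y_2,-y_1)$, so $x\cdot y^\perp=x_1y_2-x_2y_1$. A configuration $x=(x^1,\dots,x^{k+1})\in(R^2)^{k+1}$ is called good if there exist two indices $i,j$ such that $x^i\cdot x^{j\perp}$ is a unit of $R$, and bad otherwise. $\mathrm{SL}_2(R)$ acts on $R^2$ by matrix multiplication on column vectors. *)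

theory Defs
  imports Main
begin

text \<open>Vectors in R^2 are pairs; x \<cdot> y^perp = x1*y2 - x2*y1.\<close>
definition perp_dot :: "'a::comm_ring_1 \<times> 'a \<Rightarrow> 'a \<times> 'a \<Rightarrow> 'a" where
  "perp_dot x y = fst x * snd y - snd x * fst y"

text \<open>2x2 matrices ((a,b),(c,d)) = rows; action on column vectors.\<close>
type_synonym 'a mat2 = "('a \<times> 'a) \<times> ('a \<times> 'a)"

definition det2 :: "'a::comm_ring_1 mat2 \<Rightarrow> 'a" where
  "det2 g = fst (fst g) * snd (snd g) - snd (fst g) * fst (snd g)"

definition SL2 :: "'a::comm_ring_1 mat2 set" where
  "SL2 = {g. det2 g = 1}"

definition mat2_act :: "'a::comm_ring_1 mat2 \<Rightarrow> 'a \<times> 'a \<Rightarrow> 'a \<times> 'a" where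
  "mat2_act g v = (fst (fst g) * fst v + snd (fst g) * snd v,
                   fst (snd g) * fst v + snd (snd g) * snd v)"

text \<open>A configuration (x^1,...,x^{k+1}) is a function on indices {0..k}.
  Good: some pair i,j with x^i \<cdot> x^{j perp} a unit.\<close>
definition good :: "nat \<Rightarrow> (nat \<Rightarrow> 'a::comm_ring_1 \<times> 'a) \<Rightarrow> bool" where
  "good k x \<longleftrightarrow> (\<exists>i\<in>{0..k}. \<exists>j\<in>{0..k}. perp_dot (x i) (x j) dvd 1)"

end

theory Submission
  imports Defs
begin

lemma act_formula:
  fixes h :: "'a::comm_ring_1 mat2"
  assumes uw: "u * w = 1" and pq: "perp_dot p q = u"
  shows "mat2_act h v = (w * (fst (mat2_act h p) * perp_dot v q + fst (mat2_act h q) * perp_dot p v),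
                         w * (snd (mat2_act h p) * perp_dot v q + snd (mat2_act h q) * perp_dot p v))"
proof -
  obtain a b c d where h: "h = ((a,b),(c,d))" by (metis prod.collapse)
  obtain p1 p2 q1 q2 v1 v2 where pv: "p = (p1,p2)" "q = (q1,q2)" "v = (v1,v2)" by (metis prod.collapse)
  have u: "u = p1*q2 - p2*q1" using pq pv by (simp add: perp_dot_def)
  have e1: "fst (mat2_act h p) * perp_dot v q + fst (mat2_act h q) * perp_dot p v = u * (a*v1 + b*v2)"
    unfolding h pv u by (simp add: mat2_act_def perp_dot_def algebra_simps)
  have e2: "snd (mat2_act h p) * perp_dot v q + snd (mat2_act h q) * perp_dot p v = u * (c*v1 + d*v2)"
    unfolding h pv u by (simp add: mat2_act_def perp_dot_def algebra_simps)
  have "w * (u * z) = z" for z using uw by (metis mult.assoc mult.commute mult_1_left)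
  then show ?thesis unfolding e1 e2 by (simp add: h pv mat2_act_def)
qed

lemma plucker:
  fixes p q v :: "'a::comm_ring_1 \<times> 'a"
  shows "perp_dot p q * fst v = fst p * perp_dot v q + fst q * perp_dot p v"
    and "perp_dot p q * snd v = snd p * perp_dot v q + snd q * perp_dot p v"
  by (simp_all add: perp_dot_def algebra_simps)

theorem lemma2p4:
  fixes x y :: "nat \<Rightarrow> 'a::comm_ring_1 \<times> 'a" and k :: nat
  assumes "k \<ge> 1"
    and "good k x" and "good k y"
    and "\<forall>i\<in>{0..k}. \<forall>j\<in>{0..k}. perp_dot (x i) (x j) = perp_dot (y i) (y j)"
  shows "\<exists>!g. g \<in> SL2 \<and> (\<forall>i\<in>{0..k}. y i = mat2_act g (x i))"
proof -
  note P = assms(4)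
  obtain i j where ij: "i \<in> {0..k}" "j \<in> {0..k}" and ud: "perp_dot (x i) (x j) dvd 1"
    using assms(2) unfolding good_def by blast
  define u where "u = perp_dot (x i) (x j)"
  obtain w where uw: "u * w = 1" using ud unfolding u_def by (metis dvdE)
  have uy: "perp_dot (y i) (y j) = u" using P ij u_def by simp
  define F where "F v = (w * (fst (y i) * perp_dot v (x j) + fst (y j) * perp_dot (x i) v),
                         w * (snd (y i) * perp_dot v (x j) + snd (y j) * perp_dot (x i) v))" for v
  define g where "g = (F (1,0) ,F (0,1))"
  define g' where "g' = ((fst (F (1,0)), fst (F (0,1))), (snd (F (1,0)), snd (F (0,1))))"
  have gact: "mat2_act g' v = F v" for v
  proof -
    obtain v1 v2 where "v = (v1,v2)" by (metis prod.collapse)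
    then show ?thesis unfolding g'_def F_def
      by (simp add: mat2_act_def perp_dot_def algebra_simps)
  qed
  have wu: "w * (u * z) = z" for z using uw by (metis mult.assoc mult.commute mult_1_left)
  have gy: "mat2_act g' (x l) = y l" if l: "l \<in> {0..k}" for l
  proof -
    have a: "perp_dot (x l) (x j) = perp_dot (y l) (y j)" "perp_dot (x i) (x l) = perp_dot (y i) (y l)"
      using P ij l by auto
    have "F (x l) = (w * (u * fst (y l)), w * (u * snd (y l)))"
      unfolding F_def a plucker[of "y i" "y j" "y l", unfolded uy] ..
    then show ?thesis using gact wu by (simp add: prod_eq_iff)
  qed
  have detg: "det2 g' = 1"
  proof -
    obtain xi1 xi2 xj1 xj2 yi1 yi2 yj1 yj2 where e: "x i = (xi1,xi2)" "x j = (xj1,xj2)"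
      "y i = (yi1,yi2)" "y j = (yj1,yj2)" by (metis prod.collapse)
    have u1: "u = xi1*xj2 - xi2*xj1" using u_def e by (simp add: perp_dot_def)
    have u2: "u = yi1*yj2 - yi2*yj1" using uy e by (simp add: perp_dot_def)
    have "det2 g' = w * (w * ((yi1*yj2 - yi2*yj1) * (xi1*xj2 - xi2*xj1)))"
      unfolding g'_def F_def det2_def e by (simp add: perp_dot_def algebra_simps)
    also have "\<dots> = 1" unfolding u1[symmetric] u2[symmetric] using wu uw by (simp add: mult.commute)
    finally show ?thesis .
  qed
  show ?thesis
  proof (rule ex1I[of _ g'])
    show "g' \<in> SL2 \<and> (\<forall>i\<in>{0..k}. y i = mat2_act g' (x i))"
      using detg gy by (simp add: SL2_def)
  next
    fix h assume h: "h \<in> SL2 \<and> (\<forall>i\<in>{0..k}. y i = mat2_act h (x i))"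
    have "mat2_act h v = F v" for v
      using act_formula[OF uw u_def[symmetric], of h v] h ij unfolding F_def by simp
    then have "mat2_act h v = mat2_act g' v" for v using gact by simp
    from this[of "(1,0)"] this[of "(0,1)"] show "h = g'"
      by (cases h) (auto simp: mat2_act_def)
  qed
qed

end
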